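(* Let $A\subset\mathcal R$ be a zone with width $w(A)=w$. Then there is a unique finite Puiseux series $$p(y)=a_1y^{r_1}+\cdots+a_ny^{r_n},$$ with $r_i$ positive rational numbers, $r_1<\cdots<r_n<\frac1w$, such that every $\alpha\in A$ has the form $$\alpha(y)=p(y)+\mathrm{h.o.t.}_{\ge \frac1w},$$ where $\mathrm{h.o.t.}_{\ge\frac1w}$ denotes a sum of nonzero terms of order greater than or equal to $\frac1w$.
   Context: Let $\mathcal R$ be the set of germs at $0$ of analytic arcs $\{x=\alpha(y),\ y\ge 0\}$ in the closed upper half-plane of $\mathbb R^2$ (half-branches of analytic curves through $0$), where $\alpha$ is given by a convergent Puiseux series $\alpha(y)=\sum_i c_iy^{p_i}$ with positive rational exponents $p_1<p_2<\cdots$. The order $\mathcal O(\gamma)$ of a Puiseux series $\gamma$ is the smallest exponent appearing with nonzero coefficient ($\mathcal O(0)=+\infty$). For $\alpha,\beta\in\mathcal R$ write $\alpha<\beta$ if $\alpha(y)<\beta(y)$ for all sufficiently small $y>0$. A subset $A\subset\mathcal R$ is a zone (is connected) if whenever $\alpha,\beta\in A$ with $\alpha<\beta$ and $\gamma\in\mathcal R$ with $\alpha<\gamma<\beta$, then $\gamma\in A$. The distance of two arcs is $d(\alpha,\beta)=1/\mathcal O(\alpha-\beta)$ (with $1/\infty=0$), and the width of a zone is $w(A)=\sup\{d(\alpha,\beta):\alpha,\beta\in A\}$. *)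

theory Defs
  imports "HOL-Analysis.Analysis" "HOL-Library.Extended_Real"
begin

text \<open>A Puiseux series with real coefficients is represented by its coefficient
  function c :: rat => real (c q is the coefficient of y^q).\<close>

type_synonym puiseux = "rat \<Rightarrow> real"

text \<open>Convergent Puiseux series with positive rational exponents (bounded denominators)
  and positive radius of convergence: these are the elements of the set R of arcs.\<close>
definition is_arc :: "puiseux \<Rightarrow> bool" where
  "is_arc c \<longleftrightarrow> (\<exists>N::nat. N > 0 \<and>
      (\<forall>q. c q \<noteq> 0 \<longrightarrow> q > 0 \<and> (\<exists>k::nat. q = of_nat k / of_nat N)) \<and>
      (\<exists>\<rho>::real. \<rho> > 0 \<and> summable (\<lambda>k::nat. \<bar>c (of_nat k / of_nat N)\<bar> * \<rho> ^ k)))"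

definition arcs :: "puiseux set" where
  "arcs = {c. is_arc c}"

text \<open>The value alpha(y) of the arc (for small y > 0 the series converges absolutely).\<close>
definition arc_val :: "puiseux \<Rightarrow> real \<Rightarrow> real" where
  "arc_val c y = (\<Sum>\<^sub>\<infinity>q. c q * y powr (real_of_rat q))"

definition arc_less :: "puiseux \<Rightarrow> puiseux \<Rightarrow> bool" where
  "arc_less a b \<longleftrightarrow> (\<forall>\<^sub>F y in at_right 0. arc_val a y < arc_val b y)"

text \<open>Order: smallest exponent with nonzero coefficient; O(0) = infinity.\<close>
definition ord :: "puiseux \<Rightarrow> ereal" where
  "ord c = Inf ((\<lambda>q. ereal (real_of_rat q)) ` {q. c q \<noteq> 0})"

definition arc_dist :: "puiseux \<Rightarrow> puiseux \<Rightarrow> ereal" where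
  "arc_dist a b = 1 / ord (\<lambda>q. a q - b q)"

definition is_zone :: "puiseux set \<Rightarrow> bool" where
  "is_zone A \<longleftrightarrow> A \<subseteq> arcs \<and>
     (\<forall>a\<in>A. \<forall>b\<in>A. \<forall>g\<in>arcs. arc_less a b \<longrightarrow> arc_less a g \<longrightarrow> arc_less g b \<longrightarrow> g \<in> A)"

definition width :: "puiseux set \<Rightarrow> ereal" where
  "width A = Sup {arc_dist a b | a b. a \<in> A \<and> b \<in> A}"

end

theory Submission
  imports Defs
begin

lemma ord_ge_iff: "r \<le> ord f \<longleftrightarrow> (\<forall>q. f q \<noteq> 0 \<longrightarrow> r \<le> ereal (real_of_rat q))"
  unfolding ord_def by (auto simp: le_Inf_iff)

lemma ereal_inv_aux:
  fixes u w :: ereal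
  assumes "0 \<le> u" "0 < w" "1 / u \<le> w"
  shows "1 / w \<le> u"
  using assms
  apply (cases u; cases w)
  apply (auto simp: divide_ereal_def split: if_splits)
  apply (auto simp: field_simps)
  done

lemma arc_pos: "c \<in> arcs \<Longrightarrow> c q \<noteq> 0 \<Longrightarrow> q > 0"
  unfolding arcs_def is_arc_def by auto

theorem lemma5p1:
  fixes A :: "puiseux set" and w :: ereal
  assumes "is_zone A" and "width A = w" and "w > 0"
  shows "\<exists>!p :: puiseux. finite {q. p q \<noteq> 0} \<and>
           (\<forall>q. p q \<noteq> 0 \<longrightarrow> q > 0 \<and> ereal (real_of_rat q) < 1 / w) \<and>
           (\<forall>\<alpha>\<in>A. ord (\<lambda>q. \<alpha> q - p q) \<ge> 1 / w)"
proof -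
  have Aarcs: "A \<subseteq> arcs" using assms(1) unfolding is_zone_def by auto
  have "A \<noteq> {}"
  proof
    assume "A = {}"
    then have "width A = -\<infinity>" unfolding width_def by (simp add: bot_ereal_def)
    then show False using assms by auto
  qed
  then obtain a0 where a0: "a0 \<in> A" by auto
  define r where "r = 1 / w"
  have rfin: "r < \<infinity>" using assms(3) unfolding r_def
    by (cases w) (auto simp: divide_ereal_def)
  have dist: "\<And>\<alpha> \<beta> q. \<alpha> \<in> A \<Longrightarrow> \<beta> \<in> A \<Longrightarrow> \<alpha> q \<noteq> \<beta> q \<Longrightarrow> r \<le> ereal (real_of_rat q)"
  proof -
    fix \<alpha> \<beta> q assume h: "\<alpha> \<in> A" "\<beta> \<in> A" "\<alpha> q \<noteq> \<beta> q"
    have "arc_dist \<alpha> \<beta> \<le> width A" unfolding width_def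
      by (rule Sup_upper) (use h in blast)
    then have le: "1 / ord (\<lambda>q. \<alpha> q - \<beta> q) \<le> w" using assms(2) by (simp add: arc_dist_def)
    have "0 \<le> ord (\<lambda>q. \<alpha> q - \<beta> q)"
      unfolding ord_ge_iff
    proof (intro allI impI)
      fix q assume "\<alpha> q - \<beta> q \<noteq> 0"
      then have "\<alpha> q \<noteq> 0 \<or> \<beta> q \<noteq> 0" by auto
      then have "q > 0" using arc_pos h Aarcs by blast
      then show "0 \<le> ereal (real_of_rat q)" by (simp add: order_less_imp_le)
    qed
    then have "r \<le> ord (\<lambda>q. \<alpha> q - \<beta> q)" unfolding r_def
      using ereal_inv_aux[OF _ assms(3) le] by blast
    then show "r \<le> ereal (real_of_rat q)" using h(3) unfolding ord_ge_iff by auto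
  qed
  define p where "p q = (if ereal (real_of_rat q) < r then a0 q else 0)" for q
  have a0arc: "is_arc a0" using a0 Aarcs arcs_def by auto
  then obtain N :: nat where N: "N > 0" "\<forall>q. a0 q \<noteq> 0 \<longrightarrow> q > 0 \<and> (\<exists>k::nat. q = of_nat k / of_nat N)"
    unfolding is_arc_def by blast
  have fin: "finite {q. p q \<noteq> 0}"
  proof (cases r)
    case (real s)
    define M where "M = nat (ceiling (real N * s))"
    have "{q. p q \<noteq> 0} \<subseteq> (\<lambda>k. of_nat k / of_nat N) ` {..M}"
    proof
      fix q assume "q \<in> {q. p q \<noteq> 0}"
      then have q1: "a0 q \<noteq> 0" "real_of_rat q < s" unfolding p_def using real by (auto split: if_splits)
      then obtain k :: nat where k: "q = of_nat k / of_nat N" using N by blast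
      have "real_of_rat q = real k / real N" using k by (simp add: of_rat_divide)
      then have e: "real k = real N * real_of_rat q" using N by (simp add: field_simps)
      have "real N * real_of_rat q < real N * s" using q1 N by (simp add: mult_strict_left_mono)
      then have "real k < real N * s" using e by simp
      then have "k \<le> M" unfolding M_def by linarith
      then show "q \<in> (\<lambda>k. of_nat k / of_nat N) ` {..M}" using k by auto
    qed
    then show ?thesis by (rule finite_subset) auto
  next
    case PInf then show ?thesis using rfin by auto
  next
    case MInf
    then have "{q. p q \<noteq> 0} = {}" unfolding p_def by auto
    then show ?thesis by simp
  qed
  show ?thesis
  proof (rule ex1I[where a = p])
    show "finite {q. p q \<noteq> 0} \<and>
           (\<forall>q. p q \<noteq> 0 \<longrightarrow> q > 0 \<and> ereal (real_of_rat q) < 1 / w) \<and>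
           (\<forall>\<alpha>\<in>A. ord (\<lambda>q. \<alpha> q - p q) \<ge> 1 / w)"
    proof (intro conjI allI impI ballI)
      show "finite {q. p q \<noteq> 0}" by (rule fin)
    next
      fix q assume "p q \<noteq> 0"
      then show "q > 0" "ereal (real_of_rat q) < 1 / w" unfolding p_def r_def
        using N by (auto split: if_splits)
    next
      fix \<alpha> assume "\<alpha> \<in> A"
      show "1 / w \<le> ord (\<lambda>q. \<alpha> q - p q)" unfolding ord_ge_iff r_def[symmetric]
      proof (intro allI impI)
        fix q assume "\<alpha> q - p q \<noteq> 0"
        show "r \<le> ereal (real_of_rat q)"
        proof (cases "ereal (real_of_rat q) < r")
          case True
          then have "\<alpha> q \<noteq> a0 q" using \<open>\<alpha> q - p q \<noteq> 0\<close> unfolding p_def by auto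
          then show ?thesis using dist[OF \<open>\<alpha> \<in> A\<close> a0] by blast
        qed auto
      qed
    qed
  next
    fix p' assume h: "finite {q. p' q \<noteq> 0} \<and>
           (\<forall>q. p' q \<noteq> 0 \<longrightarrow> q > 0 \<and> ereal (real_of_rat q) < 1 / w) \<and>
           (\<forall>\<alpha>\<in>A. ord (\<lambda>q. \<alpha> q - p' q) \<ge> 1 / w)"
    show "p' = p"
    proof
      fix q
      show "p' q = p q"
      proof (cases "ereal (real_of_rat q) < r")
        case True
        have "r \<le> ord (\<lambda>q. a0 q - p' q)" using h a0 unfolding r_def by blast
        then have "a0 q = p' q" using True unfolding ord_ge_iff by (metis not_le eq_iff_diff_eq_0)
        then show ?thesis using True unfolding p_def by simp
      next
        case False
        then show ?thesis using h unfolding p_def r_def by auto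
      qed
    qed
  qed
qed

end
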